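(* Let $d_1\le\dots\le d_n$ be a \textsc{2-Visits} instance with discretized sequence $\langle a_1,\dots,a_n\rangle$. For every $i\in[n]$, in any feasible schedule at most $n-i$ primary visits occur at positions strictly greater than $a_i$.
   Context: \textsc{2-Visits} (primary/secondary formulation): given non-decreasing positive integers $d_1\le\dots\le d_n$, a feasible schedule is a schedule of length $2n$ (each position $1,\dots,2n$ holds one visit) containing one primary and one secondary visit of each node $i\in[n]$, such that the primary visit of $i$ is at position at most $d_i$, and the secondary visit of $i$ is either before its primary visit or at most $d_i$ positions after its primary visit. The discretized sequence is defined by $a_n=d_n$ and $a_i=\min\{a_{i+1}-1,d_i\}$ for $i<n$. *)

theory Defs
  imports Main
begin

datatype visit_kind = Primary | Secondary

text \<open>A schedule of length 2n maps each position 1..2n to a visit (node, kind);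
  it contains exactly one primary and one secondary visit of each node in [n].\<close>
definition is_schedule :: "nat \<Rightarrow> (nat \<Rightarrow> nat \<times> visit_kind) \<Rightarrow> bool" where
  "is_schedule n \<sigma> \<longleftrightarrow> bij_betw \<sigma> {1..2*n} ({1..n} \<times> UNIV)"

definition vpos :: "nat \<Rightarrow> (nat \<Rightarrow> nat \<times> visit_kind) \<Rightarrow> nat \<times> visit_kind \<Rightarrow> nat" where
  "vpos n \<sigma> v = (THE t. t \<in> {1..2*n} \<and> \<sigma> t = v)"

definition feasible :: "nat \<Rightarrow> (nat \<Rightarrow> nat) \<Rightarrow> (nat \<Rightarrow> nat \<times> visit_kind) \<Rightarrow> bool" where
  "feasible n d \<sigma> \<longleftrightarrow> is_schedule n \<sigma> \<and>
     (\<forall>i\<in>{1..n}.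
        vpos n \<sigma> (i, Primary) \<le> d i \<and>
        (vpos n \<sigma> (i, Secondary) < vpos n \<sigma> (i, Primary) \<or>
         vpos n \<sigma> (i, Secondary) \<le> vpos n \<sigma> (i, Primary) + d i))"

function disc :: "(nat \<Rightarrow> nat) \<Rightarrow> nat \<Rightarrow> nat \<Rightarrow> int" where
  "disc d n i = (if n \<le> i then int (d n) else min (disc d n (Suc i) - 1) (int (d i)))"
  by auto
termination by (relation "measure (\<lambda>(d, n, i). n - i)") auto

end

theory Submission
  imports Defs
begin

declare disc.simps[simp del]

lemma disc_witness:
  "i \<le> n \<Longrightarrow> \<exists>k. i \<le> k \<and> k \<le> n \<and> disc d n i = int (d k) - int (k - i)"
proof (induction "n - i" arbitrary: i)
  case 0
  then have "i = n" by simp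
  then show ?case by (intro exI[of _ n]) (simp add: disc.simps[of d n n])
next
  case (Suc m)
  then have lt: "i < n" by simp
  then have eq: "disc d n i = min (disc d n (Suc i) - 1) (int (d i))" by (simp add: disc.simps[of d n i])
  from Suc(1)[of "Suc i"] Suc(2) lt obtain k where
    k: "Suc i \<le> k" "k \<le> n" "disc d n (Suc i) = int (d k) - int (k - Suc i)" by force
  show ?case
  proof (cases "disc d n (Suc i) - 1 \<le> int (d i)")
    case True
    then show ?thesis using k eq by (intro exI[of _ k]) auto
  next
    case False
    then show ?thesis using eq lt by (intro exI[of _ i]) auto
  qed
qed

lemma vpos_prop:
  assumes "is_schedule n \<sigma>" "v \<in> {1..n} \<times> UNIV"
  shows "vpos n \<sigma> v \<in> {1..2*n} \<and> \<sigma> (vpos n \<sigma> v) = v"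
proof -
  have b: "bij_betw \<sigma> {1..2*n} ({1..n} \<times> UNIV)" using assms(1) by (simp add: is_schedule_def)
  then obtain t where t: "t \<in> {1..2*n}" "\<sigma> t = v"
    using assms(2) bij_betw_imp_surj_on by (metis imageE)
  have "vpos n \<sigma> v = t" unfolding vpos_def
  proof (rule the_equality)
    show "t \<in> {1..2*n} \<and> \<sigma> t = v" using t by simp
    fix s assume "s \<in> {1..2*n} \<and> \<sigma> s = v"
    then show "s = t" using t b by (metis bij_betw_imp_inj_on inj_onD)
  qed
  then show ?thesis using t by simp
qed

theorem lemma3:
  fixes n :: nat and d :: "nat \<Rightarrow> nat" and \<sigma> :: "nat \<Rightarrow> nat \<times> visit_kind" and i :: nat
  assumes pos: "\<forall>j\<in>{1..n}. d j > 0"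
    and sorted: "\<forall>j k. 1 \<le> j \<and> j \<le> k \<and> k \<le> n \<longrightarrow> d j \<le> d k"
    and feas: "feasible n d \<sigma>"
    and i: "i \<in> {1..n}"
  shows "card {j \<in> {1..n}. int (vpos n \<sigma> (j, Primary)) > disc d n i} \<le> n - i"
proof -
  define S where "S = {j \<in> {1..n}. int (vpos n \<sigma> (j, Primary)) > disc d n i}"
  define f where "f = (\<lambda>j. vpos n \<sigma> (j, Primary))"
  obtain k where k: "i \<le> k" "k \<le> n" "disc d n i = int (d k) - int (k - i)"
    using disc_witness[of i n d] i by auto
  have sch: "is_schedule n \<sigma>" using feas by (simp add: feasible_def)
  have fp: "j \<in> {1..n} \<Longrightarrow> f j \<in> {1..2*n} \<and> \<sigma> (f j) = (j, Primary)" for j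
    unfolding f_def using vpos_prop[OF sch] by simp
  have inj: "inj_on f {1..n}"
    by (rule inj_onI) (metis fp prod.inject)
  define A where "A = S \<inter> {1..k}"
  define B where "B = S \<inter> {k+1..n}"
  have SAB: "S \<subseteq> A \<union> B" unfolding A_def B_def S_def by auto
  have "card S \<le> card (A \<union> B)" by (rule card_mono) (auto simp: A_def B_def S_def SAB)
  also have "\<dots> \<le> card A + card B" by (rule card_Un_le)
  finally have c1: "card S \<le> card A + card B" .
  have cB: "card B \<le> n - k"
  proof -
    have "card B \<le> card {k+1..n}" unfolding B_def by (rule card_mono) auto
    then show ?thesis by simp
  qed
  define lo where "lo = max 1 (nat (disc d n i + 1))"
  have img: "f ` A \<subseteq> {lo..d k}"
  proof
    fix t assume "t \<in> f ` A"
    then obtain j where j: "j \<in> A" "t = f j" by auto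
    then have j1: "j \<in> {1..n}" "j \<le> k" "int t > disc d n i" unfolding A_def S_def f_def by auto
    have "t \<le> d j" using feas j1 j unfolding feasible_def f_def by auto
    also have "d j \<le> d k" using sorted j1 k by auto
    finally have "t \<le> d k" .
    moreover have "t \<ge> 1" using fp[OF j1(1)] j by auto
    ultimately show "t \<in> {lo..d k}" using j1 unfolding lo_def by auto
  qed
  have "card A = card (f ` A)"
    by (rule card_image[symmetric]) (rule inj_on_subset[OF inj], auto simp: A_def S_def)
  also have "\<dots> \<le> card {lo..d k}" by (rule card_mono[OF _ img]) simp
  also have "\<dots> = Suc (d k) - lo" by simp
  also have "\<dots> \<le> k - i" unfolding lo_def using k by auto
  finally have cA: "card A \<le> k - i" .
  show ?thesis using c1 cA cB k unfolding S_def by linarith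
qed

end
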